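(* Let $m$ be an odd positive integer and $n$ a positive integer. Let $(X,\mu)$ be a measure space, $\{\psi_{i,j}\}_{1\le i\le m,\,1\le j\le 2n}$ complex-valued functions on $X$, and $\epsilon:X\times X\to\mathbb{C}$ with $\epsilon(y,x)=-\epsilon(x,y)$. Suppose $$Q(i_1,\dots,i_{2m})=\frac12\int_{X^2}\epsilon(x,y)\prod_{s=1}^m\det\begin{pmatrix}\psi_{s,i_{2s-1}}(x)&\psi_{s,i_{2s-1}}(y)\\ \psi_{s,i_{2s}}(x)&\psi_{s,i_{2s}}(y)\end{pmatrix}\mu(\mathrm{d}x)\mu(\mathrm{d}y)$$ is well-defined for all $1\le i_1,\dots,i_{2m}\le 2n$. Then $$\frac{1}{(2n)!}\int_{X^{2n}}\mathrm{pf}\big(\epsilon(x_i,x_j)\big)_{1\le i,j\le 2n}\prod_{s=1}^m\det\big(\psi_{s,j}(x_k)\big)_{1\le j,k\le 2n}\prod_{j=1}^{2n}\mu(\mathrm{d}x_j)=\mathrm{Pf}^{[2m]}\big(Q(i_1,\dots,i_{2m})\big)_{1\le i_1,\dots,i_{2m}\le 2n}.$$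
   Context: $\mathrm{pf}$ is the ordinary Pfaffian of an antisymmetric matrix. The array $Q$ satisfies the alternation condition: for each $s$, interchanging $i_{2s-1}$ and $i_{2s}$ changes its sign. For such an array $B$ indexed by $\{1,\dots,2n\}^{2m}$, with $\mathfrak{E}_{2n}=\{\sigma\in\mathfrak{S}_{2n}:\sigma(2i-1)<\sigma(2i),\ 1\le i\le n\}$, the hyperpfaffian is $$\mathrm{Pf}^{[2m]}(B):=\frac{1}{n!}\sum_{\sigma_1,\dots,\sigma_m\in\mathfrak{E}_{2n}}\mathrm{sgn}(\sigma_1)\cdots\mathrm{sgn}(\sigma_m)\prod_{i=1}^nB(\sigma_1(2i-1),\sigma_1(2i),\dots,\sigma_m(2i-1),\sigma_m(2i)).$$ *)

theory Defs
  imports "HOL-Analysis.Analysis" "HOL-Combinatorics.Permutations"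
begin

definition det_on :: "nat \<Rightarrow> (nat \<Rightarrow> nat \<Rightarrow> complex) \<Rightarrow> complex" where
  "det_on N A = (\<Sum>p | p permutes {1..N}. of_int (sign p) * (\<Prod>j\<in>{1..N}. A j (p j)))"

definition pf :: "nat \<Rightarrow> (nat \<Rightarrow> nat \<Rightarrow> complex) \<Rightarrow> complex" where
  "pf n A = (1 / (2 ^ n * fact n)) *
     (\<Sum>p | p permutes {1..2*n}. of_int (sign p) * (\<Prod>i\<in>{1..n}. A (p (2*i-1)) (p (2*i))))"

definition E2n :: "nat \<Rightarrow> (nat \<Rightarrow> nat) set" where
  "E2n n = {p. p permutes {1..2*n} \<and> (\<forall>i\<in>{1..n}. p (2*i-1) < p (2*i))}"

text \<open>Hyperpfaffian Pf^[2m] of an array B indexed by {1..2n}^{2m};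
  the index tuple (i_1,...,i_{2m}) is represented as a list of length 2m.\<close>
definition hyperpf :: "nat \<Rightarrow> nat \<Rightarrow> (nat list \<Rightarrow> complex) \<Rightarrow> complex" where
  "hyperpf m n B = (1 / fact n) *
     (\<Sum>\<tau>\<in>Pi\<^sub>E {1..m} (\<lambda>_. E2n n).
        (\<Prod>s\<in>{1..m}. of_int (sign (\<tau> s))) *
        (\<Prod>i\<in>{1..n}. B (concat (map (\<lambda>s. [\<tau> s (2*i-1), \<tau> s (2*i)]) [1..<m+1]))))"

text \<open>The integrand defining Q(i_1,...,i_{2m}) (before the factor 1/2 and integration).\<close>
definition Q_integrand ::
  "nat \<Rightarrow> (nat \<Rightarrow> nat \<Rightarrow> 'a \<Rightarrow> complex) \<Rightarrow> ('a \<Rightarrow> 'a \<Rightarrow> complex) \<Rightarrow> nat list \<Rightarrow> 'a \<times> 'a \<Rightarrow> complex" where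
  "Q_integrand m \<psi> \<epsilon> is = (\<lambda>(x, y). \<epsilon> x y *
     (\<Prod>s\<in>{1..m}. \<psi> s (is ! (2 * s - 2)) x * \<psi> s (is ! (2 * s - 1)) y
                  - \<psi> s (is ! (2 * s - 2)) y * \<psi> s (is ! (2 * s - 1)) x))"

end

theory Submission
  imports Defs
begin


lemma prod_pairs: fixes f :: "nat \<Rightarrow> 'a::comm_monoid_mult" shows "(\<Prod>k\<in>{1..2*n}. f k) = (\<Prod>i\<in>{1..n}. f (2*i-1) * f (2*i))"
proof (induction n)
  case 0 then show ?case by simp
next
  case (Suc n)
  have "{1..2*Suc n} = insert (2*n+2) (insert (2*n+1) {1..2*n})" by auto
  then have "(\<Prod>k\<in>{1..2*Suc n}. f k) = f (2*n+2) * (f (2*n+1) * (\<Prod>k\<in>{1..2*n}. f k))" by simp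
  moreover have "(\<Prod>i\<in>{1..Suc n}. f (2*i-1) * f (2*i)) = f (2*n+1) * f (2*n+2) * (\<Prod>i\<in>{1..n}. f (2*i-1) * f (2*i))"
    by (simp add: mult.commute)
  ultimately show ?case using Suc by (simp add: algebra_simps)
qed

lemma distr_PiM_perm:
  assumes M: "sigma_finite_measure M" and p: "p permutes I" and I: "finite I"
  shows "distr (Pi\<^sub>M I (\<lambda>_. M)) (Pi\<^sub>M I (\<lambda>_. M)) (\<lambda>x. \<lambda>k\<in>I. x (p k)) = Pi\<^sub>M I (\<lambda>_. M)"
proof -
  interpret product_sigma_finite "\<lambda>_. M" using M by (simp add: product_sigma_finite_def)
  have pI: "\<And>k. k \<in> I \<Longrightarrow> p k \<in> I" using p by (simp add: permutes_in_image)
  have meas: "(\<lambda>x. \<lambda>k\<in>I. x (p k)) \<in> Pi\<^sub>M I (\<lambda>_. M) \<rightarrow>\<^sub>M Pi\<^sub>M I (\<lambda>_. M)"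
    by (intro measurable_restrict measurable_component_singleton pI)
  show ?thesis
  proof (rule PiM_eqI[OF I])
    fix A assume A: "\<And>i. i \<in> I \<Longrightarrow> A i \<in> sets M"
    have ip: "inv p permutes I" using p by (rule permutes_inv)
    have pre: "(\<lambda>x. \<lambda>k\<in>I. x (p k)) -` Pi\<^sub>E I A \<inter> space (Pi\<^sub>M I (\<lambda>_. M)) = Pi\<^sub>E I (\<lambda>k. A (inv p k))"
    proof (intro set_eqI iffI)
      fix x assume x: "x \<in> (\<lambda>x. \<lambda>k\<in>I. x (p k)) -` Pi\<^sub>E I A \<inter> space (Pi\<^sub>M I (\<lambda>_. M))"
      show "x \<in> Pi\<^sub>E I (\<lambda>k. A (inv p k))"
      proof (rule PiE_I)
        fix k assume k: "k \<in> I"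
        have "inv p k \<in> I" using ip k by (simp add: permutes_in_image)
        then have "x (p (inv p k)) \<in> A (inv p k)" using x by (auto simp: PiE_iff)
        then show "x k \<in> A (inv p k)" using p by (simp add: permutes_inverses(1))
      next
        fix k assume "k \<notin> I" then show "x k = undefined" using x by (auto simp: space_PiM PiE_iff extensional_def)
      qed
    next
      fix x assume x: "x \<in> Pi\<^sub>E I (\<lambda>k. A (inv p k))"
      have "\<And>k. k \<in> I \<Longrightarrow> x (p k) \<in> A k"
        using x pI p by (metis PiE_mem permutes_inverses(2))
      moreover have "x \<in> space (Pi\<^sub>M I (\<lambda>_. M))"
        using x A ip sets.sets_into_space unfolding space_PiM
        by (smt (verit) PiE_iff permutes_in_image subset_iff)
      ultimately show "x \<in> (\<lambda>x. \<lambda>k\<in>I. x (p k)) -` Pi\<^sub>E I A \<inter> space (Pi\<^sub>M I (\<lambda>_. M))"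
        by auto
    qed
    have "emeasure (distr (Pi\<^sub>M I (\<lambda>_. M)) (Pi\<^sub>M I (\<lambda>_. M)) (\<lambda>x. \<lambda>k\<in>I. x (p k))) (Pi\<^sub>E I A)
       = emeasure (Pi\<^sub>M I (\<lambda>_. M)) (Pi\<^sub>E I (\<lambda>k. A (inv p k)))"
      using A by (subst emeasure_distr[OF meas]) (auto simp: pre intro: sets_PiM_I_finite I)
    also have "\<dots> = (\<Prod>k\<in>I. emeasure M (A (inv p k)))"
      using A ip I by (subst emeasure_PiM) (auto simp: permutes_in_image)
    also have "\<dots> = (\<Prod>k\<in>I. emeasure M (A k))"
      using prod.permute[OF ip, of "\<lambda>k. emeasure M (A k)"] by (simp add: comp_def)
    finally show "emeasure (distr (Pi\<^sub>M I (\<lambda>_. M)) (Pi\<^sub>M I (\<lambda>_. M)) (\<lambda>x. \<lambda>k\<in>I. x (p k))) (Pi\<^sub>E I A) = (\<Prod>k\<in>I. emeasure M (A k))" .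
  qed simp
qed



definition unpair :: "nat \<Rightarrow> (nat \<Rightarrow> 'a \<times> 'a) \<Rightarrow> nat \<Rightarrow> 'a" where
  "unpair n z = (\<lambda>k\<in>{1..2*n}. if odd k then fst (z ((k+1) div 2)) else snd (z (k div 2)))"

lemma unpair_odd: "i \<in> {1..n} \<Longrightarrow> unpair n z (2*i-1) = fst (z i)"
  unfolding unpair_def by auto
lemma unpair_even: "i \<in> {1..n} \<Longrightarrow> unpair n z (2*i) = snd (z i)"
  unfolding unpair_def by auto

lemma measurable_unpair:
  "unpair n \<in> Pi\<^sub>M {1..n} (\<lambda>_. M \<Otimes>\<^sub>M M) \<rightarrow>\<^sub>M Pi\<^sub>M {1..2*n} (\<lambda>_. M)"
  unfolding unpair_def
proof (intro measurable_restrict)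
  fix k assume k: "k \<in> {1..2*n}"
  show "(\<lambda>z. if odd k then fst (z ((k+1) div 2)) else snd (z (k div 2))) \<in> Pi\<^sub>M {1..n} (\<lambda>_. M \<Otimes>\<^sub>M M) \<rightarrow>\<^sub>M M"
  proof (cases "odd k")
    case True
    then have "(k+1) div 2 \<in> {1..n}" using k by (auto elim!: oddE)
    then show ?thesis using True by simp
  next
    case False
    then have "k div 2 \<in> {1..n}" using k by auto
    then show ?thesis using False by simp
  qed
qed

lemma distr_unpair:
  assumes M: "sigma_finite_measure M"
  shows "distr (Pi\<^sub>M {1..n} (\<lambda>_. M \<Otimes>\<^sub>M M)) (Pi\<^sub>M {1..2*n} (\<lambda>_. M)) (unpair n) = Pi\<^sub>M {1..2*n} (\<lambda>_. M)"
proof -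
  interpret product_sigma_finite "\<lambda>_. M" using M by (simp add: product_sigma_finite_def)
  interpret MM: pair_sigma_finite M M using M by (simp add: pair_sigma_finite_def)
  interpret P2: product_sigma_finite "\<lambda>_. M \<Otimes>\<^sub>M M"
    by (simp add: product_sigma_finite_def MM.sigma_finite_measure_axioms)
  show ?thesis
  proof (rule PiM_eqI)
    fix A assume A: "\<And>i. i \<in> {1..2*n} \<Longrightarrow> A i \<in> sets M"
    have pre: "unpair n -` Pi\<^sub>E {1..2*n} A \<inter> space (Pi\<^sub>M {1..n} (\<lambda>_. M \<Otimes>\<^sub>M M))
       = Pi\<^sub>E {1..n} (\<lambda>i. A (2*i-1) \<times> A (2*i))"
    proof (intro set_eqI iffI)
      fix z assume z: "z \<in> unpair n -` Pi\<^sub>E {1..2*n} A \<inter> space (Pi\<^sub>M {1..n} (\<lambda>_. M \<Otimes>\<^sub>M M))"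
      show "z \<in> Pi\<^sub>E {1..n} (\<lambda>i. A (2*i-1) \<times> A (2*i))"
      proof (rule PiE_I)
        fix i assume i: "i \<in> {1..n}"
        have "2*i-1 \<in> {1..2*n}" "2*i \<in> {1..2*n}" using i by auto
        then have "unpair n z (2*i-1) \<in> A (2*i-1)" "unpair n z (2*i) \<in> A (2*i)"
          using z by (auto simp: PiE_iff simp del: atLeastAtMost_iff)
        then show "z i \<in> A (2*i-1) \<times> A (2*i)" using unpair_odd[OF i, of z] unpair_even[OF i, of z] by (simp add: mem_Times_iff)
      next
        fix i assume "i \<notin> {1..n}" then show "z i = undefined" using z by (auto simp: space_PiM PiE_iff extensional_def)
      qed
    next
      fix z assume z: "z \<in> Pi\<^sub>E {1..n} (\<lambda>i. A (2*i-1) \<times> A (2*i))"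
      have "unpair n z \<in> Pi\<^sub>E {1..2*n} A"
      proof (rule PiE_I)
        fix k assume k: "k \<in> {1..2*n}"
        show "unpair n z k \<in> A k"
        proof (cases "odd k")
          case True
          then have "(k+1) div 2 \<in> {1..n}" "2 * ((k+1) div 2) - 1 = k" using k by (auto elim!: oddE)
          then show ?thesis using z True k by (force simp: unpair_def PiE_iff mem_Times_iff)
        next
          case False
          then have "k div 2 \<in> {1..n}" "2 * (k div 2) = k" using k by auto
          then show ?thesis using z False k by (force simp: unpair_def PiE_iff mem_Times_iff)
        qed
      next
        fix k assume "k \<notin> {1..2*n}" then show "unpair n z k = undefined" unfolding unpair_def restrict_def by (rule if_not_P)
      qed
      moreover have "z \<in> space (Pi\<^sub>M {1..n} (\<lambda>_. M \<Otimes>\<^sub>M M))"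
      proof -
        have "\<And>i. i \<in> {1..n} \<Longrightarrow> A (2*i-1) \<times> A (2*i) \<subseteq> space M \<times> space M"
        proof -
          fix i assume i: "i \<in> {1..n}"
          then have "2*i-1 \<in> {1..2*n}" "2*i \<in> {1..2*n}" by auto
          then have "A (2*i-1) \<subseteq> space M" "A (2*i) \<subseteq> space M" using A sets.sets_into_space by blast+
          then show "A (2*i-1) \<times> A (2*i) \<subseteq> space M \<times> space M" by auto
        qed
        then show ?thesis using z unfolding space_PiM space_pair_measure PiE_iff by blast
      qed
      ultimately show "z \<in> unpair n -` Pi\<^sub>E {1..2*n} A \<inter> space (Pi\<^sub>M {1..n} (\<lambda>_. M \<Otimes>\<^sub>M M))" by auto
    qed
    have Ai: "\<And>i. i \<in> {1..n} \<Longrightarrow> A (2*i-1) \<in> sets M \<and> A (2*i) \<in> sets M"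
    proof -
      fix i assume i: "i \<in> {1..n}"
      then have "2*i-1 \<in> {1..2*n}" "2*i \<in> {1..2*n}" by auto
      then show "A (2*i-1) \<in> sets M \<and> A (2*i) \<in> sets M" using A by blast
    qed
    have "emeasure (distr (Pi\<^sub>M {1..n} (\<lambda>_. M \<Otimes>\<^sub>M M)) (Pi\<^sub>M {1..2*n} (\<lambda>_. M)) (unpair n)) (Pi\<^sub>E {1..2*n} A)
       = emeasure (Pi\<^sub>M {1..n} (\<lambda>_. M \<Otimes>\<^sub>M M)) (unpair n -` Pi\<^sub>E {1..2*n} A \<inter> space (Pi\<^sub>M {1..n} (\<lambda>_. M \<Otimes>\<^sub>M M)))"
      by (rule emeasure_distr[OF measurable_unpair], rule sets_PiM_I_finite) (simp_all add: A)
    also have "\<dots> = emeasure (Pi\<^sub>M {1..n} (\<lambda>_. M \<Otimes>\<^sub>M M)) (Pi\<^sub>E {1..n} (\<lambda>i. A (2*i-1) \<times> A (2*i)))"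
      by (simp only: pre)
    also have "\<dots> = (\<Prod>i\<in>{1..n}. emeasure (M \<Otimes>\<^sub>M M) (A (2*i-1) \<times> A (2*i)))"
      using Ai by (subst P2.emeasure_PiM) auto
    also have "\<dots> = (\<Prod>i\<in>{1..n}. emeasure M (A (2*i-1)) * emeasure M (A (2*i)))"
    proof (intro prod.cong refl)
      fix i assume "i \<in> {1..n}"
      with Ai have "A (2*i-1) \<in> sets M" "A (2*i) \<in> sets M" by auto
      then show "emeasure (M \<Otimes>\<^sub>M M) (A (2*i-1) \<times> A (2*i)) = emeasure M (A (2*i-1)) * emeasure M (A (2*i))"
        by (rule sigma_finite_measure.emeasure_pair_measure_Times[OF M])
    qed
    also have "\<dots> = (\<Prod>k\<in>{1..2*n}. emeasure M (A k))"
      by (rule prod_pairs[symmetric])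
    finally show "emeasure (distr (Pi\<^sub>M {1..n} (\<lambda>_. M \<Otimes>\<^sub>M M)) (Pi\<^sub>M {1..2*n} (\<lambda>_. M)) (unpair n)) (Pi\<^sub>E {1..2*n} A) = (\<Prod>k\<in>{1..2*n}. emeasure M (A k))" .
  qed simp_all
qed



lemma det_on_alt:
  "det_on N A = (\<Sum>p | p permutes {1..N}. of_int (sign p) * (\<Prod>k\<in>{1..N}. A (p k) k))"
proof -
  have "det_on N A = (\<Sum>p | p permutes {1..N}. of_int (sign (inv p)) * (\<Prod>j\<in>{1..N}. A j (inv p j)))"
    unfolding det_on_def by (rule sum_permutations_inverse)
  also have "\<dots> = (\<Sum>p | p permutes {1..N}. of_int (sign p) * (\<Prod>k\<in>{1..N}. A (p k) k))"
  proof (rule sum.cong[OF refl])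
    fix p assume "p \<in> {p. p permutes {1..N}}"
    then have p: "p permutes {1..N}" by simp
    have "permutation p" using p by (meson finite_atLeastAtMost permutation_permutes)
    then have "sign (inv p) = sign p" by (simp add: sign_inverse)
    moreover have "(\<Prod>j\<in>{1..N}. A j (inv p j)) = (\<Prod>k\<in>{1..N}. A (p k) k)"
      using prod.permute[OF p, of "\<lambda>j. A j (inv p j)"] p by (simp add: comp_def permutes_inverses(2))
    ultimately show "of_int (sign (inv p)) * (\<Prod>j\<in>{1..N}. A j (inv p j)) = of_int (sign p) * (\<Prod>k\<in>{1..N}. A (p k) k)" by simp
  qed
  finally show ?thesis .
qed

lemma det_on_cong:
  assumes "\<And>j k. j \<in> {1..N} \<Longrightarrow> k \<in> {1..N} \<Longrightarrow> A j k = B j k"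
  shows "det_on N A = det_on N B"
  unfolding det_on_def
proof (intro sum.cong refl arg_cong2[where f="(*)"] prod.cong)
  fix p j assume "p \<in> {p. p permutes {1..N}}" "j \<in> {1..N}"
  then have "p j \<in> {1..N}" by (simp only: mem_Collect_eq permutes_in_image)
  then show "A j (p j) = B j (p j)" using assms \<open>j \<in> {1..N}\<close> by blast
qed

lemma det_on_perm_cols:
  assumes p: "p permutes {1..N}"
  shows "det_on N (\<lambda>j k. A j (p k)) = of_int (sign p) * det_on N A"
proof -
  have ip: "inv p permutes {1..N}" using p by (rule permutes_inv)
  have "det_on N (\<lambda>j k. A j (p k)) = (\<Sum>q | q permutes {1..N}. of_int (sign (inv p \<circ> q)) * (\<Prod>j\<in>{1..N}. A j (p ((inv p \<circ> q) j))))"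
    unfolding det_on_def by (rule setum_permutations_compose_left[OF ip])
  also have "\<dots> = (\<Sum>q | q permutes {1..N}. of_int (sign p) * (of_int (sign q) * (\<Prod>j\<in>{1..N}. A j (q j))))"
  proof (rule sum.cong[OF refl])
    fix q assume "q \<in> {q. q permutes {1..N}}"
    then have q: "q permutes {1..N}" by simp
    have "sign (inv p \<circ> q) = sign p * sign q"
      using p q ip by (metis finite_atLeastAtMost permutation_permutes sign_compose sign_inverse)
    moreover have "\<And>j. p ((inv p \<circ> q) j) = q j" using p by (simp add: permutes_inverses(1))
    ultimately show "of_int (sign (inv p \<circ> q)) * (\<Prod>j\<in>{1..N}. A j (p ((inv p \<circ> q) j))) = of_int (sign p) * (of_int (sign q) * (\<Prod>j\<in>{1..N}. A j (q j)))"
      by simp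
  qed
  also have "\<dots> = of_int (sign p) * det_on N A"
    unfolding det_on_def by (simp add: sum_distrib_left)
  finally show ?thesis .
qed



definition Ek :: "nat \<Rightarrow> nat \<Rightarrow> (nat \<Rightarrow> nat) set" where
  "Ek n k = {p. p permutes {1..2*n} \<and> (\<forall>i\<in>{1..k}. p (2*i-1) < p (2*i))}"

definition Dp :: "(nat \<Rightarrow> nat \<Rightarrow> complex) \<Rightarrow> (nat \<Rightarrow> nat) \<Rightarrow> nat \<Rightarrow> complex" where
  "Dp a p i = a (p (2*i-1)) (2*i-1) * a (p (2*i)) (2*i) - a (p (2*i)) (2*i-1) * a (p (2*i-1)) (2*i)"

definition Fk :: "nat \<Rightarrow> (nat \<Rightarrow> nat \<Rightarrow> complex) \<Rightarrow> nat \<Rightarrow> (nat \<Rightarrow> nat) \<Rightarrow> complex" where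
  "Fk n a k p = (\<Prod>i\<in>{1..k}. Dp a p i) * (\<Prod>j\<in>{2*k+1..2*n}. a (p j) j)"

lemma finite_Ek: "finite (Ek n k)"
proof -
  have "Ek n k \<subseteq> {p. p permutes {1..2*n}}" unfolding Ek_def by auto
  then show ?thesis using finite_permutations[of "{1..2*n}"] finite_subset by auto
qed

lemma Ek_step:
  assumes k: "k < n"
  shows "(\<Sum>p\<in>Ek n k. of_int (sign p) * Fk n a k p) = (\<Sum>p\<in>Ek n (Suc k). of_int (sign p) * Fk n a (Suc k) p)"
proof -
  define a1 where "a1 = 2*k+1"
  define a2 where "a2 = 2*k+2"
  define t where "t = Transposition.transpose a1 a2"
  have a12: "a1 \<in> {1..2*n}" "a2 \<in> {1..2*n}" "a1 \<noteq> a2" using k by (auto simp: a1_def a2_def)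
  have tp: "t permutes {1..2*n}" unfolding t_def using a12 by (intro permutes_swap_id)
  have tt: "t \<circ> t = id" unfolding t_def by simp
  have tj: "\<And>j. j \<noteq> a1 \<Longrightarrow> j \<noteq> a2 \<Longrightarrow> t j = j" unfolding t_def by simp
  have ta1: "t a1 = a2" and ta2: "t a2 = a1" unfolding t_def by simp_all
  have tsmall: "\<And>i. i \<in> {1..k} \<Longrightarrow> t (2*i-1) = 2*i-1 \<and> t (2*i) = 2*i"
    using tj by (auto simp: a1_def a2_def)
  have sgn: "\<And>p. p permutes {1..2*n} \<Longrightarrow> sign (p \<circ> t) = - sign p"
  proof -
    fix p assume "p permutes {1..2*n}"
    then have "permutation p" "permutation t" using tp by (meson finite_atLeastAtMost permutation_permutes)+
    then show "sign (p \<circ> t) = - sign p" by (simp add: sign_compose t_def sign_swap_id a12)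
  qed
  define X where "X p = (\<Prod>i\<in>{1..k}. Dp a p i) * (\<Prod>j\<in>{2*k+3..2*n}. a (p j) j)" for p
  have split1: "{2*k+1..2*n} = insert a1 (insert a2 {2*k+3..2*n})" using k by (auto simp: a1_def a2_def)
  have FA: "Fk n a k p = X p * (a (p a1) a1 * a (p a2) a2)" for p
    unfolding Fk_def X_def split1 by (simp add: a1_def a2_def algebra_simps)
  have FB: "Fk n a (Suc k) p = X p * Dp a p (Suc k)" for p
  proof -
    have "{1..Suc k} = insert (Suc k) {1..k}" by auto
    moreover have "2 * Suc k + 1 = 2*k+3" by simp
    ultimately have "Fk n a (Suc k) p = (\<Prod>i\<in>insert (Suc k) {1..k}. Dp a p i) * (\<Prod>j\<in>{2*k+3..2*n}. a (p j) j)"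
      unfolding Fk_def by (simp only:)
    then show ?thesis unfolding X_def by (simp add: algebra_simps)
  qed
  have Dsk: "Dp a p (Suc k) = a (p a1) a1 * a (p a2) a2 - a (p a2) a1 * a (p a1) a2" for p
    unfolding Dp_def a1_def a2_def by simp
  have Xt: "X (p \<circ> t) = X p" for p
  proof -
    have "(\<Prod>i\<in>{1..k}. Dp a (p \<circ> t) i) = (\<Prod>i\<in>{1..k}. Dp a p i)"
    proof (intro prod.cong refl)
      fix i assume "i \<in> {1..k}"
      then have "t (2*i-1) = 2*i-1" "t (2*i) = 2*i" using tsmall by auto
      then show "Dp a (p \<circ> t) i = Dp a p i" unfolding Dp_def comp_apply by (simp only:)
    qed
    moreover have "(\<Prod>j\<in>{2*k+3..2*n}. a ((p \<circ> t) j) j) = (\<Prod>j\<in>{2*k+3..2*n}. a (p j) j)"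
      by (intro prod.cong refl) (simp add: tj a1_def a2_def)
    ultimately show ?thesis unfolding X_def by simp
  qed
  have FAt: "Fk n a k (p \<circ> t) = X p * (a (p a2) a1 * a (p a1) a2)" for p
    using FA[of "p \<circ> t"] by (simp add: Xt ta1 ta2)
  have a1a2: "2 * Suc k - 1 = a1" "2 * Suc k = a2" by (simp_all add: a1_def a2_def)
  have img: "Ek n k = Ek n (Suc k) \<union> (\<lambda>p. p \<circ> t) ` Ek n (Suc k)"
  proof (intro equalityI subsetI)
    fix p assume p: "p \<in> Ek n k"
    then have pp: "p permutes {1..2*n}" and lt: "\<forall>i\<in>{1..k}. p (2*i-1) < p (2*i)" by (auto simp: Ek_def)
    have "p a1 \<noteq> p a2" using pp a12 by (metis permutes_inj injD)
    show "p \<in> Ek n (Suc k) \<union> (\<lambda>p. p \<circ> t) ` Ek n (Suc k)"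
    proof (cases "p a1 < p a2")
      case True
      then have "p \<in> Ek n (Suc k)" using pp lt a1a2 by (auto simp: Ek_def le_Suc_eq)
      then show ?thesis by simp
    next
      case False
      with \<open>p a1 \<noteq> p a2\<close> have "p a2 < p a1" by simp
      then have "p \<circ> t \<in> Ek n (Suc k)" using pp lt a1a2 tsmall ta1 ta2 permutes_compose[OF tp pp]
        by (auto simp: Ek_def le_Suc_eq)
      moreover have "p = (p \<circ> t) \<circ> t" using tt by (simp add: comp_assoc)
      ultimately show ?thesis by blast
    qed
  next
    fix p assume "p \<in> Ek n (Suc k) \<union> (\<lambda>p. p \<circ> t) ` Ek n (Suc k)"
    then show "p \<in> Ek n k"
    proof
      assume "p \<in> Ek n (Suc k)" then show ?thesis by (auto simp: Ek_def)
    next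
      assume "p \<in> (\<lambda>p. p \<circ> t) ` Ek n (Suc k)"
      then obtain q where q: "q \<in> Ek n (Suc k)" "p = q \<circ> t" by auto
      then show ?thesis using tsmall permutes_compose[OF tp] by (auto simp: Ek_def)
    qed
  qed
  have disj: "Ek n (Suc k) \<inter> (\<lambda>p. p \<circ> t) ` Ek n (Suc k) = {}"
  proof (rule ccontr)
    assume "Ek n (Suc k) \<inter> (\<lambda>p. p \<circ> t) ` Ek n (Suc k) \<noteq> {}"
    then obtain q where q: "q \<in> Ek n (Suc k)" "q \<circ> t \<in> Ek n (Suc k)" by auto
    have ord: "r a1 < r a2" if "r \<in> Ek n (Suc k)" for r
    proof -
      have "\<forall>i\<in>{1..Suc k}. r (2*i-1) < r (2*i)" using that by (simp add: Ek_def)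
      moreover have "Suc k \<in> {1..Suc k}" by simp
      ultimately have "r (2 * Suc k - 1) < r (2 * Suc k)" by blast
      then show ?thesis by (simp add: a1_def a2_def)
    qed
    have "q a1 < q a2" using ord q(1) by blast
    moreover have "(q \<circ> t) a1 < (q \<circ> t) a2" using ord q(2) by blast
    ultimately show False by (simp add: ta1 ta2)
  qed
  have inj: "inj_on (\<lambda>p. p \<circ> t) (Ek n (Suc k))"
    by (rule inj_onI) (metis comp_assoc comp_id tt)
  have "(\<Sum>p\<in>Ek n k. of_int (sign p) * Fk n a k p)
     = (\<Sum>p\<in>Ek n (Suc k). of_int (sign p) * Fk n a k p) + (\<Sum>p\<in>(\<lambda>p. p \<circ> t) ` Ek n (Suc k). of_int (sign p) * Fk n a k p)"
    unfolding img using disj finite_Ek by (intro sum.union_disjoint) auto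
  also have "(\<Sum>p\<in>(\<lambda>p. p \<circ> t) ` Ek n (Suc k). of_int (sign p) * Fk n a k p)
      = (\<Sum>p\<in>Ek n (Suc k). of_int (sign (p \<circ> t)) * Fk n a k (p \<circ> t))"
    by (simp add: sum.reindex[OF inj])
  also have "\<dots> = (\<Sum>p\<in>Ek n (Suc k). - (of_int (sign p) * X p * (a (p a2) a1 * a (p a1) a2)))"
    by (intro sum.cong refl) (auto simp: Ek_def sgn FAt)
  also have "(\<Sum>p\<in>Ek n (Suc k). of_int (sign p) * Fk n a k p) + \<dots>
      = (\<Sum>p\<in>Ek n (Suc k). of_int (sign p) * Fk n a (Suc k) p)"
    unfolding sum.distrib[symmetric] by (intro sum.cong refl) (simp add: FA FB Dsk algebra_simps)
  finally show ?thesis .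
qed

lemma Ek_all:
  assumes "k \<le> n"
  shows "(\<Sum>p\<in>Ek n k. of_int (sign p) * Fk n a k p) = (\<Sum>p\<in>Ek n 0. of_int (sign p) * Fk n a 0 p)"
  using assms
proof (induction k)
  case 0 then show ?case by simp
next
  case (Suc k) then show ?case using Ek_step[of k n a] by simp
qed

lemma det_pairs:
  "(\<Sum>p | p permutes {1..2*n}. of_int (sign p) * (\<Prod>k\<in>{1..2*n}. a (p k) k))
   = (\<Sum>p\<in>E2n n. of_int (sign p) * (\<Prod>i\<in>{1..n}. Dp a p i))"
proof -
  have "Ek n 0 = {p. p permutes {1..2*n}}" by (simp add: Ek_def)
  moreover have "Ek n n = E2n n" by (simp add: Ek_def E2n_def)
  moreover have "\<And>p. Fk n a 0 p = (\<Prod>k\<in>{1..2*n}. a (p k) k)" by (simp add: Fk_def)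
  moreover have "\<And>p. Fk n a n p = (\<Prod>i\<in>{1..n}. Dp a p i)" by (simp add: Fk_def)
  ultimately show ?thesis using Ek_all[of n n a] by simp
qed



lemma pair_integral:
  fixes g :: "nat \<Rightarrow> 'a \<times> 'a \<Rightarrow> complex"
  assumes M: "sigma_finite_measure M" and g: "\<And>i. i \<in> {1..n} \<Longrightarrow> integrable (M \<Otimes>\<^sub>M M) (g i)"
  shows "integrable (Pi\<^sub>M {1..2*n} (\<lambda>_. M)) (\<lambda>y. \<Prod>i\<in>{1..n}. g i (y (2*i-1), y (2*i)))"
    and "(\<integral>y. (\<Prod>i\<in>{1..n}. g i (y (2*i-1), y (2*i))) \<partial>Pi\<^sub>M {1..2*n} (\<lambda>_. M))
         = (\<Prod>i\<in>{1..n}. \<integral>z. g i z \<partial>(M \<Otimes>\<^sub>M M))"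
proof -
  interpret MM: pair_sigma_finite M M using M by (simp add: pair_sigma_finite_def)
  interpret P2: product_sigma_finite "\<lambda>_. M \<Otimes>\<^sub>M M"
    by (simp add: product_sigma_finite_def MM.sigma_finite_measure_axioms)
  define f where "f y = (\<Prod>i\<in>{1..n}. g i (y (2*i-1), y (2*i)))" for y
  have fm: "f \<in> borel_measurable (Pi\<^sub>M {1..2*n} (\<lambda>_. M))"
    unfolding f_def
  proof (rule borel_measurable_prod)
    fix i assume i: "i \<in> {1..n}"
    then have "2*i-1 \<in> {1..2*n}" "2*i \<in> {1..2*n}" by auto
    then have "(\<lambda>y. (y (2*i-1), y (2*i))) \<in> Pi\<^sub>M {1..2*n} (\<lambda>_. M) \<rightarrow>\<^sub>M M \<Otimes>\<^sub>M M"
      by (intro measurable_Pair measurable_component_singleton)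
    then show "(\<lambda>y. g i (y (2*i-1), y (2*i))) \<in> borel_measurable (Pi\<^sub>M {1..2*n} (\<lambda>_. M))"
      using borel_measurable_integrable[OF g[OF i]] by (rule measurable_compose)
  qed
  have comp: "f (unpair n z) = (\<Prod>i\<in>{1..n}. g i (z i))" for z
    unfolding f_def
  proof (intro prod.cong refl)
    fix i assume i: "i \<in> {1..n}"
    have "unpair n z (2*i-1) = fst (z i)" "unpair n z (2*i) = snd (z i)"
      by (rule unpair_odd[OF i], rule unpair_even[OF i])
    then show "g i (unpair n z (2*i-1), unpair n z (2*i)) = g i (z i)" by simp
  qed
  have "integrable (Pi\<^sub>M {1..n} (\<lambda>_. M \<Otimes>\<^sub>M M)) (\<lambda>z. f (unpair n z))"
    unfolding comp by (rule P2.product_integrable_prod) (auto intro: g)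
  then have "integrable (distr (Pi\<^sub>M {1..n} (\<lambda>_. M \<Otimes>\<^sub>M M)) (Pi\<^sub>M {1..2*n} (\<lambda>_. M)) (unpair n)) f"
    by (subst integrable_distr_eq[OF measurable_unpair fm])
  then show "integrable (Pi\<^sub>M {1..2*n} (\<lambda>_. M)) (\<lambda>y. \<Prod>i\<in>{1..n}. g i (y (2*i-1), y (2*i)))"
    unfolding distr_unpair[OF M] f_def .
  have "(\<integral>y. f y \<partial>Pi\<^sub>M {1..2*n} (\<lambda>_. M)) = (\<integral>y. f y \<partial>distr (Pi\<^sub>M {1..n} (\<lambda>_. M \<Otimes>\<^sub>M M)) (Pi\<^sub>M {1..2*n} (\<lambda>_. M)) (unpair n))"
    by (simp only: distr_unpair[OF M])
  also have "\<dots> = (\<integral>z. f (unpair n z) \<partial>Pi\<^sub>M {1..n} (\<lambda>_. M \<Otimes>\<^sub>M M))"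
    by (rule integral_distr[OF measurable_unpair fm])
  also have "\<dots> = (\<Prod>i\<in>{1..n}. \<integral>z. g i z \<partial>(M \<Otimes>\<^sub>M M))"
    unfolding comp by (rule P2.product_integral_prod) (auto intro: g)
  finally show "(\<integral>y. (\<Prod>i\<in>{1..n}. g i (y (2*i-1), y (2*i))) \<partial>Pi\<^sub>M {1..2*n} (\<lambda>_. M))
         = (\<Prod>i\<in>{1..n}. \<integral>z. g i z \<partial>(M \<Otimes>\<^sub>M M))" unfolding f_def .
qed

lemma nth_concat_pairs:
  "j < length xs \<Longrightarrow> concat (map (\<lambda>s. [f s, g s]) xs) ! (2*j) = f (xs ! j) \<and>
     concat (map (\<lambda>s. [f s, g s]) xs) ! (2*j+1) = g (xs ! j)"
proof (induction xs arbitrary: j)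
  case Nil then show ?case by simp
next
  case (Cons x xs)
  then show ?case
  proof (cases j)
    case 0 then show ?thesis by simp
  next
    case (Suc j')
    then have "2*j = Suc (Suc (2*j'))" "2*j+1 = Suc (Suc (2*j'+1))" by simp_all
    then show ?thesis using Cons Suc by simp
  qed
qed

lemma concat_pairs_nth:
  assumes "s \<in> {1..m}"
  shows "concat (map (\<lambda>s. [f s, g s]) [1..<m+1]) ! (2 * s - 2) = f s"
    and "concat (map (\<lambda>s. [f s, g s]) [1..<m+1]) ! (2 * s - 1) = g s"
proof -
  have "s - 1 < length [1..<m+1]" using assms by auto
  have "[1..<m+1] ! (s-1) = 1 + (s-1)" by (rule nth_upt) (use assms in auto)
  then have "[1..<m+1] ! (s-1) = s" using assms by simp
  note this \<open>s - 1 < length [1..<m+1]\<close>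
  moreover have "2 * s - 2 = 2*(s-1)" "2 * s - 1 = 2*(s-1)+1" using assms by auto
  ultimately show "concat (map (\<lambda>s. [f s, g s]) [1..<m+1]) ! (2 * s - 2) = f s"
    and "concat (map (\<lambda>s. [f s, g s]) [1..<m+1]) ! (2 * s - 1) = g s"
    using nth_concat_pairs[of "s-1" "[1..<m+1]" f g] by simp_all
qed

lemma concat_pairs_length: "length (concat (map (\<lambda>s. [f s, g s]) xs)) = 2 * length xs"
  by (induction xs) auto

lemma concat_pairs_set: "set (concat (map (\<lambda>s. [f s, g s]) xs)) = f ` set xs \<union> g ` set xs"
  by (induction xs) auto



lemma measurable_Tp:
  assumes p: "p permutes I"
  shows "(\<lambda>x. \<lambda>k\<in>I. x (p k)) \<in> Pi\<^sub>M I (\<lambda>_. M) \<rightarrow>\<^sub>M Pi\<^sub>M I (\<lambda>_. M)"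
proof -
  have pI: "\<And>k. k \<in> I \<Longrightarrow> p k \<in> I" using p by (simp add: permutes_in_image)
  show ?thesis by (intro measurable_restrict measurable_component_singleton pI)
qed

lemma finite_E2n: "finite (E2n n)"
proof -
  have "E2n n \<subseteq> {p. p permutes {1..2*n}}" unfolding E2n_def by auto
  then show ?thesis using finite_permutations[of "{1..2*n}"] finite_subset by auto
qed

lemma sign_pow_odd: "odd m \<Longrightarrow> (of_int (sign p) :: complex) ^ m = of_int (sign p)"
  by (cases p rule: sign_cases) simp_all

theorem proposition2p3:
  fixes M :: "'a measure" and m n :: nat
    and \<psi> :: "nat \<Rightarrow> nat \<Rightarrow> 'a \<Rightarrow> complex"
    and \<epsilon> :: "'a \<Rightarrow> 'a \<Rightarrow> complex"
  assumes "odd m" and "m > 0" and "n > 0"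
    and "sigma_finite_measure M"
    and "\<And>s j. s \<in> {1..m} \<Longrightarrow> j \<in> {1..2*n} \<Longrightarrow> \<psi> s j \<in> borel_measurable M"
    and "(\<lambda>(x, y). \<epsilon> x y) \<in> borel_measurable (M \<Otimes>\<^sub>M M)"
    and "\<And>x y. \<epsilon> y x = - \<epsilon> x y"
    and "\<And>is. length is = 2*m \<Longrightarrow> set is \<subseteq> {1..2*n} \<Longrightarrow>
           integrable (M \<Otimes>\<^sub>M M) (Q_integrand m \<psi> \<epsilon> is)"
  shows "(1 / fact (2*n)) *
      (\<integral>x. pf n (\<lambda>i j. \<epsilon> (x i) (x j)) *
            (\<Prod>s\<in>{1..m}. det_on (2*n) (\<lambda>j k. \<psi> s j (x k)))
         \<partial>(Pi\<^sub>M {1..2*n} (\<lambda>_. M)))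
    = hyperpf m n (\<lambda>is. (1/2) * (\<integral>z. Q_integrand m \<psi> \<epsilon> is z \<partial>(M \<Otimes>\<^sub>M M)))"
proof -
  define dt where "dt s x = det_on (2*n) (\<lambda>j k. \<psi> s j (x k))" for s x
  define G where "G = Q_integrand m \<psi> \<epsilon>"
  define L where "L \<tau> i = concat (map (\<lambda>s. [\<tau> s (2*i-1), \<tau> s (2*i)]) [1..<m+1])"
    for \<tau> :: "nat \<Rightarrow> nat \<Rightarrow> nat" and i
  define T where "T = Pi\<^sub>E {1..m} (\<lambda>_. E2n n)"
  define sg where "sg \<tau> = (\<Prod>s\<in>{1..m}. of_int (sign (\<tau> s)) :: complex)" for \<tau> :: "nat \<Rightarrow> nat \<Rightarrow> nat"
  define h where "h y = (\<Prod>i\<in>{1..n}. \<epsilon> (y (2*i-1)) (y (2*i))) * (\<Prod>s\<in>{1..m}. dt s y)" for y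
  define P where "P = Pi\<^sub>M {1..2*n} (\<lambda>_. M)"
  have finT: "finite T" unfolding T_def by (intro finite_PiE) (auto simp: finite_E2n)
  have Lok: "length (L \<tau> i) = 2*m \<and> set (L \<tau> i) \<subseteq> {1..2*n}" if \<tau>: "\<tau> \<in> T" and i: "i \<in> {1..n}" for \<tau> i
  proof
    show "length (L \<tau> i) = 2*m" unfolding L_def by (simp add: concat_pairs_length)
    have "2*i-1 \<in> {1..2*n}" "2*i \<in> {1..2*n}" using i by auto
    moreover have "\<And>s. s \<in> {1..m} \<Longrightarrow> \<tau> s permutes {1..2*n}" using \<tau> by (auto simp: T_def E2n_def)
    ultimately have "\<And>s. s \<in> {1..m} \<Longrightarrow> \<tau> s (2*i-1) \<in> {1..2*n} \<and> \<tau> s (2*i) \<in> {1..2*n}"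
      by (meson permutes_in_image)
    moreover have "set [1..<m+1] = {1..m}" by auto
    ultimately show "set (L \<tau> i) \<subseteq> {1..2*n}" unfolding L_def concat_pairs_set
      by blast
  qed
  have Gint: "integrable (M \<Otimes>\<^sub>M M) (G (L \<tau> i))" if "\<tau> \<in> T" "i \<in> {1..n}" for \<tau> i
    unfolding G_def using Lok[OF that] assms(8) by blast
  have hexp: "h y = (\<Sum>\<tau>\<in>T. sg \<tau> * (\<Prod>i\<in>{1..n}. G (L \<tau> i) (y (2*i-1), y (2*i))))" for y
  proof -
    define D where "D s p i = Dp (\<lambda>r k. \<psi> s r (y k)) p i" for s p i
    have dts: "dt s y = (\<Sum>p\<in>E2n n. of_int (sign p) * (\<Prod>i\<in>{1..n}. D s p i))" for s
      unfolding dt_def det_on_alt D_def using det_pairs[where n=n and a="\<lambda>r k. \<psi> s r (y k)"] by simp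
    have "(\<Prod>s\<in>{1..m}. dt s y) = (\<Sum>\<tau>\<in>T. \<Prod>s\<in>{1..m}. of_int (sign (\<tau> s)) * (\<Prod>i\<in>{1..n}. D s (\<tau> s) i))"
      unfolding dts T_def by (rule prod_sum_PiE) (auto simp: finite_E2n)
    then have "h y = (\<Sum>\<tau>\<in>T. (\<Prod>i\<in>{1..n}. \<epsilon> (y (2*i-1)) (y (2*i))) * (\<Prod>s\<in>{1..m}. of_int (sign (\<tau> s)) * (\<Prod>i\<in>{1..n}. D s (\<tau> s) i)))"
      unfolding h_def by (simp add: sum_distrib_left)
    also have "\<dots> = (\<Sum>\<tau>\<in>T. sg \<tau> * (\<Prod>i\<in>{1..n}. G (L \<tau> i) (y (2*i-1), y (2*i))))"
    proof (rule sum.cong[OF refl])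
      fix \<tau> assume \<tau>: "\<tau> \<in> T"
      have Gi: "G (L \<tau> i) (y (2*i-1), y (2*i)) = \<epsilon> (y (2*i-1)) (y (2*i)) * (\<Prod>s\<in>{1..m}. D s (\<tau> s) i)" for i
      proof -
        have "G (L \<tau> i) (y (2*i-1), y (2*i)) = \<epsilon> (y (2*i-1)) (y (2*i)) *
          (\<Prod>s\<in>{1..m}. \<psi> s (L \<tau> i ! (2 * s - 2)) (y (2*i-1)) * \<psi> s (L \<tau> i ! (2 * s - 1)) (y (2*i))
                  - \<psi> s (L \<tau> i ! (2 * s - 2)) (y (2*i)) * \<psi> s (L \<tau> i ! (2 * s - 1)) (y (2*i-1)))"
          unfolding G_def Q_integrand_def by simp
        also have "\<dots> = \<epsilon> (y (2*i-1)) (y (2*i)) * (\<Prod>s\<in>{1..m}. D s (\<tau> s) i)"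
        proof (intro arg_cong2[where f="(*)"] refl prod.cong)
          fix s assume s: "s \<in> {1..m}"
          have "L \<tau> i ! (2 * s - 2) = \<tau> s (2*i-1)" "L \<tau> i ! (2 * s - 1) = \<tau> s (2*i)"
            unfolding L_def by (rule concat_pairs_nth[OF s], rule concat_pairs_nth[OF s])
          then show "\<psi> s (L \<tau> i ! (2 * s - 2)) (y (2*i-1)) * \<psi> s (L \<tau> i ! (2 * s - 1)) (y (2*i))
                  - \<psi> s (L \<tau> i ! (2 * s - 2)) (y (2*i)) * \<psi> s (L \<tau> i ! (2 * s - 1)) (y (2*i-1)) = D s (\<tau> s) i"
            unfolding D_def Dp_def by (simp add: algebra_simps)
        qed
        finally show ?thesis .
      qed
      have "(\<Prod>i\<in>{1..n}. G (L \<tau> i) (y (2*i-1), y (2*i)))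
          = (\<Prod>i\<in>{1..n}. \<epsilon> (y (2*i-1)) (y (2*i))) * (\<Prod>i\<in>{1..n}. \<Prod>s\<in>{1..m}. D s (\<tau> s) i)"
        unfolding Gi by (rule prod.distrib)
      also have "(\<Prod>i\<in>{1..n}. \<Prod>s\<in>{1..m}. D s (\<tau> s) i) = (\<Prod>s\<in>{1..m}. \<Prod>i\<in>{1..n}. D s (\<tau> s) i)"
        by (rule prod.swap)
      finally have A: "(\<Prod>i\<in>{1..n}. G (L \<tau> i) (y (2*i-1), y (2*i)))
          = (\<Prod>i\<in>{1..n}. \<epsilon> (y (2*i-1)) (y (2*i))) * (\<Prod>s\<in>{1..m}. \<Prod>i\<in>{1..n}. D s (\<tau> s) i)" .
      have B: "(\<Prod>s\<in>{1..m}. of_int (sign (\<tau> s)) * (\<Prod>i\<in>{1..n}. D s (\<tau> s) i))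
          = sg \<tau> * (\<Prod>s\<in>{1..m}. \<Prod>i\<in>{1..n}. D s (\<tau> s) i)"
        unfolding sg_def by (rule prod.distrib)
      show "(\<Prod>i\<in>{1..n}. \<epsilon> (y (2*i-1)) (y (2*i))) * (\<Prod>s\<in>{1..m}. of_int (sign (\<tau> s)) * (\<Prod>i\<in>{1..n}. D s (\<tau> s) i))
          = sg \<tau> * (\<Prod>i\<in>{1..n}. G (L \<tau> i) (y (2*i-1), y (2*i)))"
        unfolding A B by (simp add: algebra_simps)
    qed
    finally show ?thesis .
  qed
  have h_eq: "h = (\<lambda>y. \<Sum>\<tau>\<in>T. sg \<tau> * (\<Prod>i\<in>{1..n}. G (L \<tau> i) (y (2*i-1), y (2*i))))"
    by (rule ext) (rule hexp)
  have term_int: "integrable P (\<lambda>y. \<Prod>i\<in>{1..n}. G (L \<tau> i) (y (2*i-1), y (2*i)))" if "\<tau> \<in> T" for \<tau>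
    unfolding P_def using pair_integral(1)[OF assms(4), of n "\<lambda>i. G (L \<tau> i)"] Gint[OF that] by blast
  have term_integral: "(\<integral>y. (\<Prod>i\<in>{1..n}. G (L \<tau> i) (y (2*i-1), y (2*i))) \<partial>P) = (\<Prod>i\<in>{1..n}. \<integral>z. G (L \<tau> i) z \<partial>(M \<Otimes>\<^sub>M M))"
    if "\<tau> \<in> T" for \<tau>
    unfolding P_def using pair_integral(2)[OF assms(4), of n "\<lambda>i. G (L \<tau> i)"] Gint[OF that] by blast
  have h_int: "integrable P h"
    unfolding h_eq by (rule Bochner_Integration.integrable_sum, rule integrable_mult_right, erule term_int)
  have h_integral: "(\<integral>y. h y \<partial>P) = (\<Sum>\<tau>\<in>T. sg \<tau> * (\<Prod>i\<in>{1..n}. \<integral>z. G (L \<tau> i) z \<partial>(M \<Otimes>\<^sub>M M)))"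
    unfolding h_eq
    by (subst Bochner_Integration.integral_sum, rule integrable_mult_right, erule term_int)
       (intro sum.cong refl, simp only: term_integral integral_mult_right_zero)
  define c where "c = (1 / (2 ^ n * fact n) :: complex)"
  define Pm where "Pm = {p. p permutes {1..2*n}}"
  have Fexp: "pf n (\<lambda>i j. \<epsilon> (x i) (x j)) * (\<Prod>s\<in>{1..m}. dt s x)
      = c * (\<Sum>p\<in>Pm. h (\<lambda>k\<in>{1..2*n}. x (p k)))" for x
  proof -
    have each: "of_int (sign p) * (\<Prod>i\<in>{1..n}. \<epsilon> (x (p (2*i-1))) (x (p (2*i)))) * (\<Prod>s\<in>{1..m}. dt s x)
        = h (\<lambda>k\<in>{1..2*n}. x (p k))" if p: "p \<in> Pm" for p
    proof -
      have pp: "p permutes {1..2*n}" using p by (simp add: Pm_def)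
      have dtT: "dt s (\<lambda>k\<in>{1..2*n}. x (p k)) = of_int (sign p) * dt s x" for s
      proof -
        have "dt s (\<lambda>k\<in>{1..2*n}. x (p k)) = det_on (2*n) (\<lambda>j k. \<psi> s j (x (p k)))"
          unfolding dt_def by (rule det_on_cong) simp
        also have "\<dots> = of_int (sign p) * dt s x"
          unfolding dt_def by (rule det_on_perm_cols[OF pp])
        finally show ?thesis .
      qed
      have "(\<Prod>s\<in>{1..m}. dt s (\<lambda>k\<in>{1..2*n}. x (p k))) = of_int (sign p) ^ m * (\<Prod>s\<in>{1..m}. dt s x)"
        unfolding dtT by (simp add: prod.distrib)
      also have "\<dots> = of_int (sign p) * (\<Prod>s\<in>{1..m}. dt s x)"
        by (simp only: sign_pow_odd[OF assms(1)])
      finally have X: "(\<Prod>s\<in>{1..m}. dt s (\<lambda>k\<in>{1..2*n}. x (p k))) = of_int (sign p) * (\<Prod>s\<in>{1..m}. dt s x)" .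
      have Y: "(\<Prod>i\<in>{1..n}. \<epsilon> ((\<lambda>k\<in>{1..2*n}. x (p k)) (2*i-1)) ((\<lambda>k\<in>{1..2*n}. x (p k)) (2*i)))
          = (\<Prod>i\<in>{1..n}. \<epsilon> (x (p (2*i-1))) (x (p (2*i))))"
      proof (intro prod.cong refl)
        fix i assume "i \<in> {1..n}"
        then have "2*i-1 \<in> {1..2*n}" "2*i \<in> {1..2*n}" by auto
        then show "\<epsilon> ((\<lambda>k\<in>{1..2*n}. x (p k)) (2*i-1)) ((\<lambda>k\<in>{1..2*n}. x (p k)) (2*i)) = \<epsilon> (x (p (2*i-1))) (x (p (2*i)))"
          by (simp only: restrict_apply' )
      qed
      show ?thesis unfolding h_def X Y by (simp add: algebra_simps)
    qed
    have "pf n (\<lambda>i j. \<epsilon> (x i) (x j)) * (\<Prod>s\<in>{1..m}. dt s x)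
        = c * (\<Sum>p\<in>Pm. of_int (sign p) * (\<Prod>i\<in>{1..n}. \<epsilon> (x (p (2*i-1))) (x (p (2*i)))) * (\<Prod>s\<in>{1..m}. dt s x))"
      unfolding pf_def c_def Pm_def by (simp add: sum_distrib_right mult.assoc)
    also have "\<dots> = c * (\<Sum>p\<in>Pm. h (\<lambda>k\<in>{1..2*n}. x (p k)))"
      using each by simp
    finally show ?thesis .
  qed
  have Tp_int: "integrable P (\<lambda>x. h (\<lambda>k\<in>{1..2*n}. x (p k)))" if p: "p \<in> Pm" for p
  proof -
    have pp: "p permutes {1..2*n}" using p by (simp add: Pm_def)
    have "integrable (distr P P (\<lambda>x. \<lambda>k\<in>{1..2*n}. x (p k))) h"
      unfolding P_def distr_PiM_perm[OF assms(4) pp finite_atLeastAtMost] using h_int by (simp add: P_def)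
    then show ?thesis
      by (subst (asm) integrable_distr_eq[OF measurable_Tp[OF pp, of M, folded P_def] borel_measurable_integrable[OF h_int]])
  qed
  have Tp_integral: "(\<integral>x. h (\<lambda>k\<in>{1..2*n}. x (p k)) \<partial>P) = (\<integral>y. h y \<partial>P)" if p: "p \<in> Pm" for p
  proof -
    have pp: "p permutes {1..2*n}" using p by (simp add: Pm_def)
    have "(\<integral>y. h y \<partial>P) = (\<integral>y. h y \<partial>(distr P P (\<lambda>x. \<lambda>k\<in>{1..2*n}. x (p k))))"
      unfolding P_def distr_PiM_perm[OF assms(4) pp finite_atLeastAtMost] ..
    also have "\<dots> = (\<integral>x. h (\<lambda>k\<in>{1..2*n}. x (p k)) \<partial>P)"
      by (rule integral_distr[OF measurable_Tp[OF pp, of M, folded P_def] borel_measurable_integrable[OF h_int]])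
    finally show ?thesis by simp
  qed
  have cardPm: "card Pm = fact (2*n)"
    unfolding Pm_def by (rule card_permutations) simp_all
  have "(\<integral>x. pf n (\<lambda>i j. \<epsilon> (x i) (x j)) * (\<Prod>s\<in>{1..m}. det_on (2*n) (\<lambda>j k. \<psi> s j (x k))) \<partial>P)
      = (\<integral>x. c * (\<Sum>p\<in>Pm. h (\<lambda>k\<in>{1..2*n}. x (p k))) \<partial>P)"
    using Fexp unfolding dt_def by simp
  also have "\<dots> = c * (\<Sum>p\<in>Pm. \<integral>x. h (\<lambda>k\<in>{1..2*n}. x (p k)) \<partial>P)"
    by (simp only: integral_mult_right_zero) (subst Bochner_Integration.integral_sum, erule Tp_int, rule refl)
  also have "\<dots> = c * (\<Sum>p\<in>Pm. \<integral>y. h y \<partial>P)"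
    by (intro arg_cong[where f="\<lambda>z. c * z"] sum.cong refl Tp_integral)
  also have "\<dots> = c * (of_nat (fact (2*n)) * (\<integral>y. h y \<partial>P))"
    by (simp add: cardPm)
  finally have LHS: "(\<integral>x. pf n (\<lambda>i j. \<epsilon> (x i) (x j)) * (\<Prod>s\<in>{1..m}. det_on (2*n) (\<lambda>j k. \<psi> s j (x k))) \<partial>P)
      = c * (of_nat (fact (2*n)) * (\<Sum>\<tau>\<in>T. sg \<tau> * (\<Prod>i\<in>{1..n}. \<integral>z. G (L \<tau> i) z \<partial>(M \<Otimes>\<^sub>M M))))"
    unfolding h_integral .
  have RHS: "hyperpf m n (\<lambda>is. (1/2) * (\<integral>z. Q_integrand m \<psi> \<epsilon> is z \<partial>(M \<Otimes>\<^sub>M M)))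
      = (1 / fact n) * (\<Sum>\<tau>\<in>T. sg \<tau> * ((1/2)^n * (\<Prod>i\<in>{1..n}. \<integral>z. G (L \<tau> i) z \<partial>(M \<Otimes>\<^sub>M M))))"
    unfolding hyperpf_def T_def[symmetric] sg_def[symmetric] L_def[symmetric] G_def[symmetric]
    by (simp add: prod_dividef power_one_over)
  define S where "S = (\<Sum>\<tau>\<in>T. sg \<tau> * (\<Prod>i\<in>{1..n}. \<integral>z. G (L \<tau> i) z \<partial>(M \<Otimes>\<^sub>M M)))"
  have S2: "(\<Sum>\<tau>\<in>T. sg \<tau> * ((1/2)^n * (\<Prod>i\<in>{1..n}. \<integral>z. G (L \<tau> i) z \<partial>(M \<Otimes>\<^sub>M M)))) = (1/2)^n * S"
    unfolding S_def sum_distrib_left by (simp add: algebra_simps)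
  show ?thesis
    unfolding P_def[symmetric] LHS RHS S2 S_def[symmetric] c_def
    by (simp add: field_simps power_one_over)
qed

end
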